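(* For the odd-cycle index coding problem, $\limsup_{\epsilon\to0}R^m_{lb}(\mathbf{0}+\epsilon\mathbf{1})<\frac m2$.
   Context: Odd-cycle index coding problem: $m\ge5$ odd; source $\mathbf{X}=(X_1,\dots,X_m)$ of i.i.d. Bernoulli$(1/2)$ bits; decoder $i\in[m]$ has side information $\mathbf{Y_i}=(X_{i-1},X_{i+1})$ (indices mod $m$, taken in $[m]$) and wants $X_i$; it is cast as a rate-distortion problem with distortion $d_i(\mathbf{x},\hat x_i)=\mathbf{1}\{\hat x_i\ne x_i\}$ and target $D_i=0$; rates in bits. $R^m_{lb}(\mathbf{D}+\epsilon\mathbf{1})=\sup_{\bar P}\inf_{\bar C}\bar R_{lb}-\epsilon$, where $\bar R_{lb}=\max_\sigma[I(\mathbf{X};V,U_{Y_{\sigma(1)}}|\mathbf{Y}_{\sigma(1)})+\sum_{k=2}^mI(\mathbf{X};U_{Y_{\sigma(k)}}|V,U_{Y_{\sigma(1)}},\dots,U_{Y_{\sigma(k-1)}},\mathbf{Y}_{\sigma(1)},\dots,\mathbf{Y}_{\sigma(k)})]$ over permutations $\sigma$ of $[m]$; $\bar P$ is the set of joint laws of $(\mathbf{X},\mathbf{Y_1},\dots,\mathbf{Y_m})$ with the given pairwise marginals of $(\mathbf{X},\mathbf{Y_i})$; $\bar C$ is the set of $(V,U_{Y_1},\dots,U_{Y_m})$ with $(\mathbf{Y_1},\dots,\mathbf{Y_m})\leftrightarrow\mathbf{X}\leftrightarrow(V,U_{Y_1},\dots,U_{Y_m})$ and functions $g_i$ with $E[d_i(\mathbf{X},g_i(V,U_{Y_i},\mathbf{Y_i}))]\le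 D_i+\epsilon$. *)

theory Defs
  imports "HOL-Probability.Probability" "HOL-Combinatorics.Multiset_Permutations"
begin

(* Discrete information measures (bits) for random variables given as functions
   of the outcome of a finitely supported pmf. *)
definition ent :: "'w pmf \<Rightarrow> ('w \<Rightarrow> 'a) \<Rightarrow> real" where
  "ent p f = - (\<Sum>y\<in>f ` set_pmf p. pmf (map_pmf f p) y * log 2 (pmf (map_pmf f p) y))"

definition cmi :: "'w pmf \<Rightarrow> ('w \<Rightarrow> 'a) \<Rightarrow> ('w \<Rightarrow> 'b) \<Rightarrow> ('w \<Rightarrow> 'c) \<Rightarrow> real" where
  "cmi p A B C = ent p (\<lambda>w. (A w, C w)) + ent p (\<lambda>w. (B w, C w))
                 - ent p (\<lambda>w. (A w, B w, C w)) - ent p C"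

(* Sources: X = (X_0,...,X_{m-1}) encoded as nat \<Rightarrow> bool (False outside {0..<m});
   Y_i encoded as component i of a function nat \<Rightarrow> bool \<times> bool.
   Indices are 0-based and taken mod m. *)
type_synonym xvec = "nat \<Rightarrow> bool"
type_synonym yvec = "nat \<Rightarrow> bool \<times> bool"
(* outcome of the full system: (X, (Y_i)_i, V, (U_{Y_i})_i); auxiliary alphabets are nat *)
type_synonym outc = "xvec \<times> yvec \<times> nat \<times> (nat \<Rightarrow> nat)"

definition Xlaw :: "nat \<Rightarrow> xvec pmf" where
  "Xlaw m = pmf_of_set {x. \<forall>j\<ge>m. \<not> x j}"

definition side :: "nat \<Rightarrow> xvec \<Rightarrow> nat \<Rightarrow> bool \<times> bool" where
  "side m x i = (x ((i + m - 1) mod m), x ((i + 1) mod m))"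

definition oX :: "outc \<Rightarrow> xvec" where "oX w = fst w"
definition oY :: "outc \<Rightarrow> yvec" where "oY w = fst (snd w)"
definition oV :: "outc \<Rightarrow> nat" where "oV w = fst (snd (snd w))"
definition oU :: "outc \<Rightarrow> nat \<Rightarrow> nat" where "oU w = snd (snd (snd w))"

definition Pbar :: "nat \<Rightarrow> (xvec \<times> yvec) pmf set" where
  "Pbar m = {P. (\<forall>i<m. map_pmf (\<lambda>(x, y). (x, y i)) P
                        = map_pmf (\<lambda>x. (x, side m x i)) (Xlaw m))
              \<and> (\<forall>(x, y)\<in>set_pmf P. \<forall>i\<ge>m. y i = (False, False))}"

(* Markov chain (Y_1..Y_m) -- X -- (V, U_{Y_1}, ..., U_{Y_m}) *)
definition markov :: "outc pmf \<Rightarrow> bool" where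
  "markov q \<longleftrightarrow> (\<forall>x y w.
      pmf (map_pmf (\<lambda>z. (oX z, oY z, oV z, oU z)) q) (x, y, w)
        * pmf (map_pmf oX q) x
      = pmf (map_pmf (\<lambda>z. (oX z, oY z)) q) (x, y)
        * pmf (map_pmf (\<lambda>z. (oX z, oV z, oU z)) q) (x, w))"

(* \<bar>C: admissible (V, U_{Y_i}) (finite alphabets) with decoders achieving distortion D_i + eps,
   here D_i = 0 and d_i(x, xhat) = 1{xhat \<noteq> x_i} *)
definition Cbar :: "nat \<Rightarrow> real \<Rightarrow> (xvec \<times> yvec) pmf \<Rightarrow> outc pmf set" where
  "Cbar m eps P = {q. finite (set_pmf q)
       \<and> map_pmf (\<lambda>z. (oX z, oY z)) q = P
       \<and> markov q
       \<and> (\<exists>g :: nat \<Rightarrow> nat \<times> nat \<times> (bool \<times> bool) \<Rightarrow> bool. \<forall>i<m.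
            measure_pmf.expectation q
              (\<lambda>z. of_bool (g i (oV z, oU z i, oY z i) \<noteq> oX z i)) \<le> 0 + eps)}"

(* the bracketed term for a permutation sigma (given as a list of the elements of {0..<m}) *)
definition Rterm :: "nat list \<Rightarrow> outc pmf \<Rightarrow> real" where
  "Rterm \<sigma> q =
     cmi q oX (\<lambda>z. (oV z, oU z (\<sigma>!0))) (\<lambda>z. oY z (\<sigma>!0))
   + (\<Sum>k\<in>{1..<length \<sigma>}.
        cmi q oX (\<lambda>z. oU z (\<sigma>!k))
          (\<lambda>z. (oV z, map (oU z) (take k \<sigma>), map (oY z) (take (Suc k) \<sigma>))))"

definition Rbar :: "nat \<Rightarrow> outc pmf \<Rightarrow> real" where
  "Rbar m q = Max ((\<lambda>\<sigma>. Rterm \<sigma> q) ` permutations_of_set {0..<m})"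

definition Rlb :: "nat \<Rightarrow> real \<Rightarrow> real" where
  "Rlb m eps = (SUP P\<in>Pbar m. INF q\<in>Cbar m eps P. Rbar m q) - eps"

end

theory Submission
  imports Defs
begin


lemma ent_map: "ent (map_pmf g p) f = ent p (f \<circ> g)"
  unfolding ent_def by (simp add: pmf.map_comp image_comp)

lemma pmf_map_sum:
  assumes fin: "finite (set_pmf p)"
  shows "pmf (map_pmf f p) y = (\<Sum>t\<in>{t\<in>set_pmf p. f t = y}. pmf p t)"
proof -
  have "pmf (map_pmf f p) y = measure p (f -` {y})" by (rule pmf_map)
  also have "\<dots> = measure p (f -` {y} \<inter> set_pmf p)"
    by (simp add: measure_Int_set_pmf)
  also have "\<dots> = (\<Sum>t\<in>f -` {y} \<inter> set_pmf p. pmf p t)"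
    using fin by (intro measure_measure_pmf_finite) auto
  also have "f -` {y} \<inter> set_pmf p = {t\<in>set_pmf p. f t = y}" by auto
  finally show ?thesis .
qed

lemma ent_exp:
  assumes fin: "finite (set_pmf p)"
  shows "ent p f = - (\<Sum>w\<in>set_pmf p. pmf p w * log 2 (pmf (map_pmf f p) (f w)))"
proof -
  let ?L = "\<lambda>y. log 2 (pmf (map_pmf f p) y)"
  have "(\<Sum>w\<in>set_pmf p. pmf p w * ?L (f w)) =
        (\<Sum>y\<in>f ` set_pmf p. \<Sum>w\<in>{w\<in>set_pmf p. f w = y}. pmf p w * ?L (f w))"
    using fin by (rule sum.image_gen)
  also have "\<dots> = (\<Sum>y\<in>f ` set_pmf p. (\<Sum>w\<in>{w\<in>set_pmf p. f w = y}. pmf p w) * ?L y)"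
    by (intro sum.cong refl) (auto simp: sum_distrib_right)
  also have "\<dots> = (\<Sum>y\<in>f ` set_pmf p. pmf (map_pmf f p) y * ?L y)"
    using fin by (simp add: pmf_map_sum)
  finally show ?thesis unfolding ent_def by simp
qed

lemma marg_sum:
  assumes fin: "finite (set_pmf q)" and sub: "fst ` set_pmf q \<subseteq> A'" and finA: "finite A'"
  shows "(\<Sum>a\<in>A'. pmf q (a, c)) = pmf (map_pmf snd q) c"
proof -
  have "(\<Sum>a\<in>A'. pmf q (a, c)) = (\<Sum>t\<in>(\<lambda>a. (a, c)) ` A'. pmf q t)"
    by (subst sum.reindex) (auto simp: inj_on_def)
  also have "\<dots> = (\<Sum>t\<in>(\<lambda>a. (a, c)) ` A' \<inter> set_pmf q. pmf q t)"
    using finA by (intro sum.mono_neutral_right) (auto simp: set_pmf_eq)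
  also have "(\<lambda>a. (a, c)) ` A' \<inter> set_pmf q = {t\<in>set_pmf q. snd t = c}"
    using sub by force
  also have "(\<Sum>t\<in>{t\<in>set_pmf q. snd t = c}. pmf q t) = pmf (map_pmf snd q) c"
    using fin by (simp add: pmf_map_sum)
  finally show ?thesis .
qed

lemma log_le_lin: "(y::real) > 0 \<Longrightarrow> log 2 y \<le> (y - 1) / ln 2"
  using ln_le_minus_one[of y] by (simp add: log_def divide_right_mono)

lemma cmi_map: "cmi (map_pmf g p) A B C = cmi p (A \<circ> g) (B \<circ> g) (C \<circ> g)"
  unfolding cmi_def ent_map by (simp add: comp_def)

lemma key_sum:
  fixes r :: "('a \<times> 'b \<times> 'c) pmf"
  assumes fin: "finite (set_pmf r)"
  defines "fAC \<equiv> \<lambda>t::'a \<times> 'b \<times> 'c. (fst t, snd (snd t))"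
      and "fBC \<equiv> \<lambda>t::'a \<times> 'b \<times> 'c. (fst (snd t), snd (snd t))"
      and "fC \<equiv> \<lambda>t::'a \<times> 'b \<times> 'c. snd (snd t)"
  shows "(\<Sum>t\<in>set_pmf r. pmf (map_pmf fAC r) (fAC t) * pmf (map_pmf fBC r) (fBC t)
            / pmf (map_pmf fC r) (fC t)) \<le> 1"
proof -
  define S where "S = set_pmf r"
  define SA where "SA = fst ` S"
  define SB where "SB = (\<lambda>t. fst (snd t)) ` S"
  define SC where "SC = fC ` S"
  define pAC where "pAC a c = pmf (map_pmf fAC r) (a, c)" for a c
  define pBC where "pBC b c = pmf (map_pmf fBC r) (b, c)" for b c
  define pC where "pC c = pmf (map_pmf fC r) c" for c
  have finS: "finite S" using fin S_def by simp
  have fins: "finite SA" "finite SB" "finite SC" using finS by (auto simp: SA_def SB_def SC_def)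
  have "(\<Sum>t\<in>S. pmf (map_pmf fAC r) (fAC t) * pmf (map_pmf fBC r) (fBC t)
            / pmf (map_pmf fC r) (fC t))
        = (\<Sum>t\<in>S. (\<lambda>(a,b,c). pAC a c * pBC b c / pC c) t)"
    by (intro sum.cong refl) (auto simp: pAC_def pBC_def pC_def fAC_def fBC_def fC_def split: prod.splits)
  also have "\<dots> \<le> (\<Sum>t\<in>SA \<times> SB \<times> SC. (\<lambda>(a,b,c). pAC a c * pBC b c / pC c) t)"
    using fins by (intro sum_mono2) (auto simp: SA_def SB_def SC_def fC_def pAC_def pBC_def pC_def
        intro!: divide_nonneg_nonneg mult_nonneg_nonneg, force+)
  also have "\<dots> = (\<Sum>a\<in>SA. \<Sum>b\<in>SB. \<Sum>c\<in>SC. pAC a c * pBC b c / pC c)"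
    by (simp add: sum.cartesian_product)
  also have "\<dots> = (\<Sum>c\<in>SC. \<Sum>a\<in>SA. \<Sum>b\<in>SB. pAC a c * pBC b c / pC c)"
  proof -
    have "(\<Sum>a\<in>SA. \<Sum>b\<in>SB. \<Sum>c\<in>SC. pAC a c * pBC b c / pC c)
        = (\<Sum>a\<in>SA. \<Sum>c\<in>SC. \<Sum>b\<in>SB. pAC a c * pBC b c / pC c)"
      by (rule sum.cong[OF refl], rule sum.swap)
    also have "\<dots> = (\<Sum>c\<in>SC. \<Sum>a\<in>SA. \<Sum>b\<in>SB. pAC a c * pBC b c / pC c)"
      by (rule sum.swap)
    finally show ?thesis .
  qed
  also have "\<dots> = (\<Sum>c\<in>SC. (\<Sum>a\<in>SA. pAC a c) * (\<Sum>b\<in>SB. pBC b c) / pC c)"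
    by (intro sum.cong refl) (simp add: sum_product sum_divide_distrib)
  also have "\<dots> = (\<Sum>c\<in>SC. pC c * pC c / pC c)"
  proof (intro sum.cong refl)
    fix c assume "c \<in> SC"
    have "(\<Sum>a\<in>SA. pAC a c) = pmf (map_pmf snd (map_pmf fAC r)) c"
      unfolding pAC_def using fin fins
      by (intro marg_sum) (auto simp: SA_def S_def fAC_def image_image)
    also have "\<dots> = pC c" by (simp add: pC_def pmf.map_comp comp_def fAC_def fC_def)
    finally have 1: "(\<Sum>a\<in>SA. pAC a c) = pC c" .
    have "(\<Sum>b\<in>SB. pBC b c) = pmf (map_pmf snd (map_pmf fBC r)) c"
      unfolding pBC_def using fin fins
      by (intro marg_sum) (auto simp: SB_def S_def fBC_def image_image)
    also have "\<dots> = pC c" by (simp add: pC_def pmf.map_comp comp_def fBC_def fC_def)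
    finally have 2: "(\<Sum>b\<in>SB. pBC b c) = pC c" .
    show "(\<Sum>a\<in>SA. pAC a c) * (\<Sum>b\<in>SB. pBC b c) / pC c = pC c * pC c / pC c"
      using 1 2 by simp
  qed
  also have "\<dots> = (\<Sum>c\<in>SC. pC c)"
  proof (intro sum.cong refl)
    fix c assume "c \<in> SC"
    then have "c \<in> set_pmf (map_pmf fC r)" unfolding SC_def S_def by simp
    then have "pC c \<noteq> 0" unfolding pC_def by (metis set_pmf_iff)
    then show "pC c * pC c / pC c = pC c" by simp
  qed
  also have "\<dots> = 1" unfolding pC_def using fins
    by (intro sum_pmf_eq_1) (auto simp: SC_def S_def)
  finally show ?thesis unfolding S_def .
qed


lemma pmf_map_pos: "t \<in> set_pmf r \<Longrightarrow> 0 < pmf (map_pmf f r) (f t)"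
proof -
  assume "t \<in> set_pmf r"
  then have "f t \<in> set_pmf (map_pmf f r)" by simp
  then have "pmf (map_pmf f r) (f t) \<noteq> 0" by (metis set_pmf_iff)
  then show ?thesis using pmf_nonneg[of "map_pmf f r" "f t"] by linarith
qed

lemma pointwise_ineq:
  fixes p a b c :: real
  assumes "p > 0" "a > 0" "b > 0" "c > 0"
  shows "(p - a * b / c) / ln 2 \<le> p * (log 2 p + log 2 c - log 2 a - log 2 b)"
proof -
  define y where "y = a * b / (p * c)"
  have y: "y > 0" using assms by (simp add: y_def)
  have "log 2 p + log 2 c - log 2 a - log 2 b = - log 2 y"
    using assms by (simp add: y_def log_mult log_divide)
  moreover have "log 2 y \<le> (y - 1) / ln 2" using y by (rule log_le_lin)
  ultimately have "(1 - y) / ln 2 \<le> log 2 p + log 2 c - log 2 a - log 2 b"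
    by (simp add: diff_divide_distrib)
  then have "p * ((1 - y) / ln 2) \<le> p * (log 2 p + log 2 c - log 2 a - log 2 b)"
    using assms by (intro mult_left_mono) auto
  moreover have "p * ((1 - y) / ln 2) = (p - a * b / c) / ln 2"
    using assms by (simp add: y_def field_simps)
  ultimately show ?thesis by simp
qed

lemma cmi_nonneg0:
  fixes r :: "('a \<times> 'b \<times> 'c) pmf"
  assumes fin: "finite (set_pmf r)"
  shows "0 \<le> cmi r fst (\<lambda>t. fst (snd t)) (\<lambda>t. snd (snd t))"
proof -
  define fAC where "fAC = (\<lambda>t::'a \<times> 'b \<times> 'c. (fst t, snd (snd t)))"
  define fBC where "fBC = (\<lambda>t::'a \<times> 'b \<times> 'c. (fst (snd t), snd (snd t)))"
  define fC where "fC = (\<lambda>t::'a \<times> 'b \<times> 'c. snd (snd t))"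
  define S where "S = set_pmf r"
  let ?a = "\<lambda>t. pmf (map_pmf fAC r) (fAC t)"
  let ?b = "\<lambda>t. pmf (map_pmf fBC r) (fBC t)"
  let ?c = "\<lambda>t. pmf (map_pmf fC r) (fC t)"
  have id3: "(\<lambda>w::'a \<times> 'b \<times> 'c. (fst w, fst (snd w), snd (snd w))) = (\<lambda>w. w)" by auto
  have "cmi r fst (\<lambda>t. fst (snd t)) (\<lambda>t. snd (snd t)) =
     ent r fAC + ent r fBC - ent r (\<lambda>w. w) - ent r fC"
    unfolding cmi_def fAC_def fBC_def fC_def id3 by simp
  also have "\<dots> = (\<Sum>t\<in>S. pmf r t * (log 2 (pmf r t) + log 2 (?c t) - log 2 (?a t) - log 2 (?b t)))"
    using fin unfolding ent_exp[OF fin] S_def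
    by (simp add: map_pmf_ident algebra_simps sum_subtractf sum.distrib sum_negf)
  also have "\<dots> \<ge> (\<Sum>t\<in>S. (pmf r t - ?a t * ?b t / ?c t) / ln 2)"
    by (intro sum_mono pointwise_ineq) (auto simp: S_def pmf_map_pos set_pmf_iff intro: pmf_map_pos)
  finally have 1: "(\<Sum>t\<in>S. (pmf r t - ?a t * ?b t / ?c t) / ln 2) \<le> cmi r fst (\<lambda>t. fst (snd t)) (\<lambda>t. snd (snd t))" .
  have "(\<Sum>t\<in>S. (pmf r t - ?a t * ?b t / ?c t) / ln 2) = ((\<Sum>t\<in>S. pmf r t) - (\<Sum>t\<in>S. ?a t * ?b t / ?c t)) / ln 2"
    by (simp add: sum_divide_distrib[symmetric] sum_subtractf)
  also have "(\<Sum>t\<in>S. pmf r t) = 1" unfolding S_def using fin by (intro sum_pmf_eq_1) auto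
  finally have 2: "(\<Sum>t\<in>S. (pmf r t - ?a t * ?b t / ?c t) / ln 2) = (1 - (\<Sum>t\<in>S. ?a t * ?b t / ?c t)) / ln 2" .
  have "(\<Sum>t\<in>S. ?a t * ?b t / ?c t) \<le> 1"
    unfolding S_def fAC_def fBC_def fC_def using key_sum[OF fin] by simp
  then have "0 \<le> (1 - (\<Sum>t\<in>S. ?a t * ?b t / ?c t)) / ln 2" by simp
  with 1 2 show ?thesis by linarith
qed

lemma cmi_nonneg:
  assumes fin: "finite (set_pmf p)"
  shows "0 \<le> cmi p A B C"
proof -
  have "cmi (map_pmf (\<lambda>w. (A w, B w, C w)) p) fst (\<lambda>t. fst (snd t)) (\<lambda>t. snd (snd t)) = cmi p A B C"
    unfolding cmi_map by (simp add: comp_def)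
  moreover have "0 \<le> cmi (map_pmf (\<lambda>w. (A w, B w, C w)) p) fst (\<lambda>t. fst (snd t)) (\<lambda>t. snd (snd t))"
    using fin by (intro cmi_nonneg0) simp
  ultimately show ?thesis by simp
qed


definition XA :: "nat \<Rightarrow> xvec set" where "XA m = {x. \<forall>j\<ge>m. \<not> x j}"

lemma card_fset:
  assumes "finite T"
  shows "finite {x::nat\<Rightarrow>bool. \<forall>j. j \<notin> T \<longrightarrow> \<not> x j}"
    and "card {x::nat\<Rightarrow>bool. \<forall>j. j \<notin> T \<longrightarrow> \<not> x j} = 2 ^ card T"
proof -
  have b: "bij_betw (\<lambda>x. {j. x j}) {x::nat\<Rightarrow>bool. \<forall>j. j \<notin> T \<longrightarrow> \<not> x j} (Pow T)"
    by (rule bij_betw_byWitness[where f'="\<lambda>B j. j \<in> B"]) auto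
  show "finite {x::nat\<Rightarrow>bool. \<forall>j. j \<notin> T \<longrightarrow> \<not> x j}"
    using bij_betw_finite[OF b] assms by simp
  show "card {x::nat\<Rightarrow>bool. \<forall>j. j \<notin> T \<longrightarrow> \<not> x j} = 2 ^ card T"
    using bij_betw_same_card[OF b] assms by (simp add: card_Pow)
qed

lemma XA_eq: "XA m = {x::nat\<Rightarrow>bool. \<forall>j. j \<notin> {0..<m} \<longrightarrow> \<not> x j}"
  unfolding XA_def by auto

lemma XA_fin: "finite (XA m)" and XA_card: "card (XA m) = 2 ^ m"
  unfolding XA_eq using card_fset[of "{0..<m}"] by auto

lemma XA_ne: "XA m \<noteq> {}"
  unfolding XA_def by auto

lemma set_Xlaw: "set_pmf (Xlaw m) = XA m"
  unfolding Xlaw_def XA_def[symmetric] using XA_fin XA_ne by simp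

lemma pmf_Xlaw: "x \<in> XA m \<Longrightarrow> pmf (Xlaw m) x = 1 / 2 ^ m"
  unfolding Xlaw_def XA_def[symmetric] using XA_fin XA_ne XA_card by simp

lemma fiber_card:
  assumes S: "S \<subseteq> {0..<m}" and x: "x \<in> XA m"
  shows "card {t\<in>XA m. \<forall>j\<in>S. t j = x j} = 2 ^ (m - card S)"
proof -
  let ?T = "{0..<m} - S"
  have b: "bij_betw (\<lambda>t j. if j \<in> S then False else t j) {t\<in>XA m. \<forall>j\<in>S. t j = x j}
              {z::nat\<Rightarrow>bool. \<forall>j. j \<notin> ?T \<longrightarrow> \<not> z j}"
    by (rule bij_betw_byWitness[where f'="\<lambda>z j. if j \<in> S then x j else z j"])
       (use S x in \<open>auto simp: XA_def fun_eq_iff\<close>)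
  have "card {t\<in>XA m. \<forall>j\<in>S. t j = x j} = 2 ^ card ?T"
    using bij_betw_same_card[OF b] card_fset(2)[of ?T] by simp
  also have "card ?T = m - card S" using S by (simp add: card_Diff_subset finite_subset)
  finally show ?thesis .
qed

lemma ent_Xlaw:
  assumes S: "S \<subseteq> {0..<m}"
    and agree: "\<And>x x'. x \<in> XA m \<Longrightarrow> x' \<in> XA m \<Longrightarrow> (G x = G x') = (\<forall>j\<in>S. x j = x' j)"
  shows "ent (Xlaw m) G = card S"
proof -
  have finS: "card S \<le> m" using S by (metis card_atLeastLessThan card_mono finite_atLeastLessThan diff_zero)
  have fin: "finite (set_pmf (Xlaw m))" using XA_fin set_Xlaw by simp
  have pm: "pmf (map_pmf G (Xlaw m)) (G x) = 1 / 2 ^ card S" if x: "x \<in> XA m" for x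
  proof -
    have "pmf (map_pmf G (Xlaw m)) (G x) = (\<Sum>t\<in>{t\<in>XA m. G t = G x}. pmf (Xlaw m) t)"
      using pmf_map_sum[OF fin] set_Xlaw by simp
    also have "{t\<in>XA m. G t = G x} = {t\<in>XA m. \<forall>j\<in>S. t j = x j}"
      using agree x by auto
    also have "(\<Sum>t\<in>{t\<in>XA m. \<forall>j\<in>S. t j = x j}. pmf (Xlaw m) t) = (\<Sum>t\<in>{t\<in>XA m. \<forall>j\<in>S. t j = x j}. 1 / 2 ^ m)"
      by (intro sum.cong refl) (simp add: pmf_Xlaw)
    also have "\<dots> = 2 ^ (m - card S) / 2 ^ m"
      using fiber_card[OF S x] by simp
    also have "\<dots> = 1 / 2 ^ card S"
    proof -
      have "(2::real) ^ m = 2 ^ (m - card S) * 2 ^ card S"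
        using finS by (simp add: power_add[symmetric])
      then show ?thesis by simp
    qed
    finally show ?thesis .
  qed
  have "ent (Xlaw m) G = - (\<Sum>x\<in>XA m. pmf (Xlaw m) x * log 2 (pmf (map_pmf G (Xlaw m)) (G x)))"
    using ent_exp[OF fin] set_Xlaw by simp
  also have "\<dots> = - (\<Sum>x\<in>XA m. 1 / 2 ^ m * (- real (card S)))"
    by (intro arg_cong[where f=uminus] sum.cong refl) (simp add: pmf_Xlaw pm log_divide)
  also have "\<dots> = card S" using XA_card by simp
  finally show ?thesis .
qed


definition Yfun :: "nat \<Rightarrow> xvec \<Rightarrow> yvec" where
  "Yfun m x = (\<lambda>i. if i < m then side m x i else (False, False))"
definition Ufun :: "xvec \<Rightarrow> nat \<Rightarrow> nat" where
  "Ufun x = (\<lambda>i. if x i then 1 else 0)"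
definition emb :: "nat \<Rightarrow> xvec \<Rightarrow> outc" where
  "emb m x = (x, Yfun m x, 0, Ufun x)"
definition q0 :: "nat \<Rightarrow> outc pmf" where
  "q0 m = map_pmf (emb m) (Xlaw m)"

lemma XA_eq_iff: "x \<in> XA m \<Longrightarrow> x' \<in> XA m \<Longrightarrow> (x = x') = (\<forall>j\<in>{0..<m}. x j = x' j)"
  unfolding XA_def by (auto simp: fun_eq_iff)

lemma cmi_q0:
  assumes SB: "SB \<subseteq> {0..<m}" and SC: "SC \<subseteq> {0..<m}"
    and aBC: "\<And>x x'. x \<in> XA m \<Longrightarrow> x' \<in> XA m \<Longrightarrow>
       ((B (emb m x), C (emb m x)) = (B (emb m x'), C (emb m x'))) = (\<forall>j\<in>SB \<union> SC. x j = x' j)"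
    and aC: "\<And>x x'. x \<in> XA m \<Longrightarrow> x' \<in> XA m \<Longrightarrow>
       (C (emb m x) = C (emb m x')) = (\<forall>j\<in>SC. x j = x' j)"
  shows "cmi (q0 m) oX B C = real (card (SB \<union> SC)) - real (card SC)"
proof -
  have oXe: "oX (emb m x) = x" for x by (simp add: oX_def emb_def)
  have e1: "ent (Xlaw m) (\<lambda>w. ((oX \<circ> emb m) w, (C \<circ> emb m) w)) = card {0..<m}"
    by (rule ent_Xlaw) (auto simp: oXe XA_eq_iff[symmetric])
  have e2: "ent (Xlaw m) (\<lambda>w. ((B \<circ> emb m) w, (C \<circ> emb m) w)) = card (SB \<union> SC)"
    by (rule ent_Xlaw) (use SB SC aBC in auto)
  have e3: "ent (Xlaw m) (\<lambda>w. ((oX \<circ> emb m) w, (B \<circ> emb m) w, (C \<circ> emb m) w)) = card {0..<m}"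
    by (rule ent_Xlaw) (auto simp: oXe XA_eq_iff[symmetric])
  have e4: "ent (Xlaw m) (C \<circ> emb m) = card SC"
    by (rule ent_Xlaw) (use SC aC in auto)
  show ?thesis unfolding q0_def cmi_map unfolding cmi_def e1 e2 e3 e4 by simp
qed


definition nb :: "nat \<Rightarrow> nat \<Rightarrow> nat set" where
  "nb m i = {(i + m - 1) mod m, (i + 1) mod m}"
definition SCk :: "nat \<Rightarrow> nat list \<Rightarrow> nat \<Rightarrow> nat set" where
  "SCk m \<sigma> k = set (take k \<sigma>) \<union> (\<Union>i\<in>set (take (Suc k) \<sigma>). nb m i)"

lemma emb_simps[simp]: "oX (emb m x) = x" "oY (emb m x) = Yfun m x" "oV (emb m x) = 0" "oU (emb m x) = Ufun x"
  by (simp_all add: emb_def oX_def oY_def oV_def oU_def)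

lemma nb_sub: "0 < m \<Longrightarrow> nb m i \<subseteq> {0..<m}"
  by (auto simp: nb_def)

lemma side_eq: "(side m x i = side m x' i) = (\<forall>j\<in>nb m i. x j = x' j)"
  by (auto simp: side_def nb_def)

lemma mapY_eq: "set xs \<subseteq> {0..<m} \<Longrightarrow>
   (map (Yfun m x) xs = map (Yfun m x') xs) = (\<forall>j\<in>(\<Union>i\<in>set xs. nb m i). x j = x' j)"
  by (auto simp: map_eq_conv Yfun_def side_eq subset_iff)

lemma mapU_eq: "(map (Ufun x) xs = map (Ufun x') xs) = (\<forall>j\<in>set xs. x j = x' j)"
  by (auto simp: map_eq_conv Ufun_def)

lemma card_diff_bool: "finite S \<Longrightarrow> real (card ({a} \<union> S)) - real (card S) = of_bool (a \<notin> S)"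
  by (simp add: card_insert_if)

lemma SCk_sub:
  assumes "set \<sigma> \<subseteq> {0..<m}" "0 < m"
  shows "SCk m \<sigma> k \<subseteq> {0..<m}"
  using assms nb_sub[of m] set_take_subset[of k \<sigma>] set_take_subset[of "Suc k" \<sigma>]
  unfolding SCk_def by blast

lemma term_k:
  assumes sig: "set \<sigma> \<subseteq> {0..<m}" and k: "k < length \<sigma>" and m: "0 < m"
  shows "cmi (q0 m) oX (\<lambda>z. oU z (\<sigma>!k))
          (\<lambda>z. (oV z, map (oU z) (take k \<sigma>), map (oY z) (take (Suc k) \<sigma>)))
        = of_bool (\<sigma>!k \<notin> SCk m \<sigma> k)"
proof -
  have sk: "\<sigma>!k \<in> {0..<m}" using sig nth_mem[OF k] by blast
  have st: "set (take (Suc k) \<sigma>) \<subseteq> {0..<m}" using set_take_subset[of "Suc k" \<sigma>] sig by (rule subset_trans)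
  have "cmi (q0 m) oX (\<lambda>z. oU z (\<sigma>!k))
          (\<lambda>z. (oV z, map (oU z) (take k \<sigma>), map (oY z) (take (Suc k) \<sigma>)))
      = real (card ({\<sigma>!k} \<union> SCk m \<sigma> k)) - real (card (SCk m \<sigma> k))"
  proof (rule cmi_q0)
    show "{\<sigma>!k} \<subseteq> {0..<m}" using sk by simp
    show "SCk m \<sigma> k \<subseteq> {0..<m}" using SCk_sub[OF sig m] .
    fix x x' :: xvec
    have U1: "(Ufun x (\<sigma>!k) = Ufun x' (\<sigma>!k)) = (x (\<sigma>!k) = x' (\<sigma>!k))"
      by (simp add: Ufun_def)
    have C: "((0::nat, map (Ufun x) (take k \<sigma>), map (Yfun m x) (take (Suc k) \<sigma>)) =
              (0, map (Ufun x') (take k \<sigma>), map (Yfun m x') (take (Suc k) \<sigma>)))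
          = (\<forall>j\<in>SCk m \<sigma> k. x j = x' j)"
      unfolding SCk_def prod.inject mapU_eq mapY_eq[OF st] by (simp add: ball_Un)
    show "((\<lambda>z. (oV z, map (oU z) (take k \<sigma>), map (oY z) (take (Suc k) \<sigma>))) (emb m x) =
           (\<lambda>z. (oV z, map (oU z) (take k \<sigma>), map (oY z) (take (Suc k) \<sigma>))) (emb m x'))
          = (\<forall>j\<in>SCk m \<sigma> k. x j = x' j)"
      using C by simp
    show "(((\<lambda>z. oU z (\<sigma>!k)) (emb m x), (\<lambda>z. (oV z, map (oU z) (take k \<sigma>), map (oY z) (take (Suc k) \<sigma>))) (emb m x)) =
           ((\<lambda>z. oU z (\<sigma>!k)) (emb m x'), (\<lambda>z. (oV z, map (oU z) (take k \<sigma>), map (oY z) (take (Suc k) \<sigma>))) (emb m x')))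
          = (\<forall>j\<in>{\<sigma>!k} \<union> SCk m \<sigma> k. x j = x' j)"
      using C U1 by (simp add: ball_Un)
  qed
  also have "\<dots> = of_bool (\<sigma>!k \<notin> SCk m \<sigma> k)"
    by (rule card_diff_bool, rule finite_subset[OF SCk_sub[OF sig m]]) simp
  finally show ?thesis .
qed


lemma perm_props:
  assumes "\<sigma> \<in> permutations_of_set {0..<m}"
  shows "set \<sigma> = {0..<m}" "distinct \<sigma>" "length \<sigma> = m"
  using assms by (auto simp: permutations_of_set_def dest: distinct_card)

lemma term_0:
  assumes sig: "set \<sigma> \<subseteq> {0..<m}" and k: "0 < length \<sigma>" and m: "0 < m"
  shows "cmi (q0 m) oX (\<lambda>z. (oV z, oU z (\<sigma>!0))) (\<lambda>z. oY z (\<sigma>!0))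
        = of_bool (\<sigma>!0 \<notin> SCk m \<sigma> 0)"
proof -
  have sk: "\<sigma>!0 \<in> {0..<m}" using sig nth_mem[OF k] by blast
  have t1: "set (take (Suc 0) \<sigma>) = {\<sigma>!0}" using k by (cases \<sigma>) auto
  have SC0: "SCk m \<sigma> 0 = nb m (\<sigma>!0)" unfolding SCk_def t1 by simp
  have "cmi (q0 m) oX (\<lambda>z. (oV z, oU z (\<sigma>!0))) (\<lambda>z. oY z (\<sigma>!0))
      = real (card ({\<sigma>!0} \<union> nb m (\<sigma>!0))) - real (card (nb m (\<sigma>!0)))"
  proof (rule cmi_q0)
    show "{\<sigma>!0} \<subseteq> {0..<m}" using sk by simp
    show "nb m (\<sigma>!0) \<subseteq> {0..<m}" using nb_sub[OF m] .
    fix x x' :: xvec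
    have U1: "(Ufun x (\<sigma>!0) = Ufun x' (\<sigma>!0)) = (x (\<sigma>!0) = x' (\<sigma>!0))"
      by (simp add: Ufun_def)
    have C: "(Yfun m x (\<sigma>!0) = Yfun m x' (\<sigma>!0)) = (\<forall>j\<in>nb m (\<sigma>!0). x j = x' j)"
      using sk by (simp add: Yfun_def side_eq)
    show "((\<lambda>z. oY z (\<sigma>!0)) (emb m x) = (\<lambda>z. oY z (\<sigma>!0)) (emb m x'))
          = (\<forall>j\<in>nb m (\<sigma>!0). x j = x' j)"
      using C by simp
    show "(((\<lambda>z. (oV z, oU z (\<sigma>!0))) (emb m x), (\<lambda>z. oY z (\<sigma>!0)) (emb m x)) =
           ((\<lambda>z. (oV z, oU z (\<sigma>!0))) (emb m x'), (\<lambda>z. oY z (\<sigma>!0)) (emb m x')))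
          = (\<forall>j\<in>{\<sigma>!0} \<union> nb m (\<sigma>!0). x j = x' j)"
      using C U1 by (simp add: ball_Un)
  qed
  also have "\<dots> = of_bool (\<sigma>!0 \<notin> SCk m \<sigma> 0)"
    unfolding SC0 by (rule card_diff_bool) (simp add: nb_def)
  finally show ?thesis .
qed

lemma Rterm_q0:
  assumes sig: "\<sigma> \<in> permutations_of_set {0..<m}" and m: "0 < m"
  shows "Rterm \<sigma> (q0 m) = (\<Sum>k\<in>{0..<m}. of_bool (\<sigma>!k \<notin> SCk m \<sigma> k))"
proof -
  note pp = perm_props[OF sig]
  have s: "set \<sigma> \<subseteq> {0..<m}" using pp by simp
  have "Rterm \<sigma> (q0 m) = of_bool (\<sigma>!0 \<notin> SCk m \<sigma> 0) + (\<Sum>k\<in>{1..<m}. of_bool (\<sigma>!k \<notin> SCk m \<sigma> k))"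
    unfolding Rterm_def pp(3)
    using term_0[OF s _ m] term_k[OF s _ m] pp(3) m by simp
  also have "\<dots> = (\<Sum>k\<in>{0..<m}. of_bool (\<sigma>!k \<notin> SCk m \<sigma> k))"
    by (simp only: sum.atLeast_Suc_lessThan[OF m] One_nat_def)
  finally show ?thesis .
qed

lemma A1: "(u::nat) < m \<Longrightarrow> 2 \<le> m \<Longrightarrow> (u+1) mod m \<noteq> u"
  by (cases "u + 1 = m") auto
lemma A2: "(u::nat) < m \<Longrightarrow> ((u+1) mod m + m - 1) mod m = u"
  by (cases "u + 1 = m") auto
lemma A3: "(u::nat) < m \<Longrightarrow> v < m \<Longrightarrow> (u+1) mod m = (v+1) mod m \<Longrightarrow> u = v"
  by (cases "u + 1 = m"; cases "v + 1 = m") auto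
lemma take_mem: "j < k \<Longrightarrow> k < length s \<Longrightarrow> s!j \<in> set (take (Suc k) s)"
proof -
  assume a: "j < k" "k < length s"
  then have "take (Suc k) s ! j = s ! j" "j < length (take (Suc k) s)" by auto
  then show ?thesis by (metis nth_mem)
qed

lemma indep_card:
  fixes I :: "nat set"
  assumes I: "I \<subseteq> {0..<m}" and odd: "odd m"
    and ind: "\<And>u v. u \<in> I \<Longrightarrow> v \<in> I \<Longrightarrow> v \<noteq> (u + 1) mod m"
  shows "2 * card I \<le> m - 1"
proof -
  let ?f = "\<lambda>u. (u + 1) mod m"
  have m0: "0 < m" using odd by (cases m) auto
  have finI: "finite I" using I finite_subset by blast
  have inj: "inj_on ?f I"
  proof (rule inj_onI)
    fix x y assume xy: "x \<in> I" "y \<in> I" "?f x = ?f y"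
    have "x < m" "y < m" using I xy(1,2) by auto
    then show "x = y" using xy(3) by (rule A3)
  qed
  have disj: "I \<inter> ?f ` I = {}" using ind by auto
  have sub: "I \<union> ?f ` I \<subseteq> {0..<m}" using I m0 by auto
  have c1: "card (I \<union> ?f ` I) = card I + card I"
    using card_Un_disjoint[OF finI finite_imageI[OF finI] disj] card_image[OF inj] by linarith
  have c2: "card (I \<union> ?f ` I) \<le> m" using card_mono[OF finite_atLeastLessThan sub] by simp
  from c1 c2 have "2 * card I \<le> m" by linarith
  moreover have "2 * card I \<noteq> m"
  proof
    assume "2 * card I = m"
    then have "even m" by (simp flip: \<open>2 * card I = m\<close>)
    with odd show False by simp
  qed
  ultimately show ?thesis by linarith
qed




lemma pmf_graph: "pmf (map_pmf (\<lambda>x. (x, f x)) p) (a, b) = (if b = f a then pmf p a else 0)"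
proof -
  have "(\<lambda>x. (x, f x)) -` {(a, b)} = (if b = f a then {a} else {})" by auto
  then show ?thesis by (simp add: pmf_map measure_pmf_single)
qed

definition P0 :: "nat \<Rightarrow> (xvec \<times> yvec) pmf" where
  "P0 m = map_pmf (\<lambda>x. (x, Yfun m x)) (Xlaw m)"

lemma P0_in: "P0 m \<in> Pbar m"
  unfolding Pbar_def P0_def
  by (auto simp: pmf.map_comp comp_def Yfun_def intro!: map_pmf_cong)

lemma Pbar_char:
  assumes P: "P \<in> Pbar m" and m: "0 < m"
  shows "P = P0 m"
proof -
  have c0: "map_pmf (\<lambda>(x, y). (x, y 0)) P = map_pmf (\<lambda>x. (x, side m x 0)) (Xlaw m)"
    using P m unfolding Pbar_def by auto
  have "map_pmf fst (map_pmf (\<lambda>(x, y). (x, y 0)) P) = map_pmf fst (map_pmf (\<lambda>x. (x, side m x 0)) (Xlaw m))"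
    using c0 by simp
  then have mf: "map_pmf fst P = Xlaw m"
    by (simp add: pmf.map_comp comp_def split_beta map_pmf_ident)
  have supp: "y = Yfun m x" if xy: "(x, y) \<in> set_pmf P" for x y
  proof
    fix i
    show "y i = Yfun m x i"
    proof (cases "i < m")
      case True
      have ci: "map_pmf (\<lambda>(x, y). (x, y i)) P = map_pmf (\<lambda>x. (x, side m x i)) (Xlaw m)"
        using P True unfolding Pbar_def by auto
      have "(x, y i) \<in> set_pmf (map_pmf (\<lambda>(x, y). (x, y i)) P)" using xy by force
      then have "(x, y i) \<in> set_pmf (map_pmf (\<lambda>x. (x, side m x i)) (Xlaw m))" using ci by simp
      then have "y i = side m x i" by auto
      then show ?thesis using True by (simp add: Yfun_def)
    next
      case False
      then show ?thesis using P xy unfolding Pbar_def Yfun_def by auto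
    qed
  qed
  have "P = map_pmf (\<lambda>z. z) P" by (simp add: map_pmf_ident)
  also have "\<dots> = map_pmf (\<lambda>z. (fst z, Yfun m (fst z))) P"
    by (rule map_pmf_cong) (auto dest: supp)
  also have "\<dots> = map_pmf (\<lambda>x. (x, Yfun m x)) (map_pmf fst P)"
    by (simp add: pmf.map_comp comp_def)
  also have "\<dots> = P0 m" unfolding mf P0_def ..
  finally show ?thesis .
qed

lemma q0_in:
  assumes eps: "0 \<le> eps"
  shows "q0 m \<in> Cbar m eps (P0 m)"
  unfolding Cbar_def
proof (intro CollectI conjI)
  show "finite (set_pmf (q0 m))" unfolding q0_def using XA_fin by (simp add: set_Xlaw)
  show "map_pmf (\<lambda>z. (oX z, oY z)) (q0 m) = P0 m"
    unfolding q0_def P0_def by (simp add: pmf.map_comp comp_def)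
  show "markov (q0 m)"
    unfolding markov_def
  proof (intro allI)
    fix x y w
    have e1: "map_pmf (\<lambda>z. (oX z, oY z, oV z, oU z)) (q0 m) = map_pmf (\<lambda>x. (x, (Yfun m x, (0::nat, Ufun x)))) (Xlaw m)"
      unfolding q0_def by (simp add: pmf.map_comp comp_def)
    have e2: "map_pmf oX (q0 m) = Xlaw m"
      unfolding q0_def by (simp add: pmf.map_comp comp_def map_pmf_ident)
    have e3: "map_pmf (\<lambda>z. (oX z, oY z)) (q0 m) = map_pmf (\<lambda>x. (x, Yfun m x)) (Xlaw m)"
      unfolding q0_def by (simp add: pmf.map_comp comp_def)
    have e4: "map_pmf (\<lambda>z. (oX z, oV z, oU z)) (q0 m) = map_pmf (\<lambda>x. (x, (0::nat, Ufun x))) (Xlaw m)"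
      unfolding q0_def by (simp add: pmf.map_comp comp_def)
    show "pmf (map_pmf (\<lambda>z. (oX z, oY z, oV z, oU z)) (q0 m)) (x, y, w) * pmf (map_pmf oX (q0 m)) x =
          pmf (map_pmf (\<lambda>z. (oX z, oY z)) (q0 m)) (x, y) * pmf (map_pmf (\<lambda>z. (oX z, oV z, oU z)) (q0 m)) (x, w)"
      unfolding e1 e2 e3 e4 pmf_graph by auto
  qed
  show "\<exists>g :: nat \<Rightarrow> nat \<times> nat \<times> (bool \<times> bool) \<Rightarrow> bool. \<forall>i<m.
            measure_pmf.expectation (q0 m)
              (\<lambda>z. of_bool (g i (oV z, oU z i, oY z i) \<noteq> oX z i)) \<le> 0 + eps"
  proof (intro exI allI impI)
    fix i
    have "measure_pmf.expectation (q0 m)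
              (\<lambda>z. of_bool ((\<lambda>i (v, u, y). u = 1) i (oV z, oU z i, oY z i) \<noteq> oX z i) :: real) = 0"
    proof -
      have z: "(\<lambda>x::xvec. of_bool (((if x i then 1 else 0) = (Suc 0::nat)) = (\<not> x i)) :: real) = (\<lambda>_. 0)"
        by (rule ext) auto
      show ?thesis unfolding q0_def by (simp add: Ufun_def z)
    qed
    then show "measure_pmf.expectation (q0 m)
              (\<lambda>z. of_bool ((\<lambda>i (v, u, y). u = 1) i (oV z, oU z i, oY z i) \<noteq> oX z i)) \<le> 0 + eps"
      using eps by simp
  qed
qed

lemma Rterm_bound:
  assumes sig: "\<sigma> \<in> permutations_of_set {0..<m}" and odd: "odd m" and m3: "3 \<le> m"
  shows "(\<Sum>k\<in>{0..<m}. of_bool (\<sigma>!k \<notin> SCk m \<sigma> k) :: real) \<le> (real m - 1) / 2"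
proof -
  note pp = perm_props[OF sig]
  define J where "J = {k\<in>{0..<m}. \<sigma>!k \<notin> SCk m \<sigma> k}"
  define I where "I = (\<lambda>k. \<sigma>!k) ` J"
  have sumJ: "(\<Sum>k\<in>{0..<m}. of_bool (\<sigma>!k \<notin> SCk m \<sigma> k) :: real) = real (card J)"
    unfolding J_def by (subst sum_of_bool_eq) (simp_all add: Int_def)
  have injJ: "inj_on (\<lambda>k. \<sigma>!k) J"
    using pp unfolding J_def by (intro inj_on_nth) auto
  have cI: "card I = card J" unfolding I_def using card_image[OF injJ] .
  have Isub: "I \<subseteq> {0..<m}"
  proof
    fix u assume "u \<in> I"
    then obtain k where "k \<in> J" "u = \<sigma>!k" unfolding I_def by auto
    then have "k < length \<sigma>" using pp(3) unfolding J_def by auto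
    then have "\<sigma>!k \<in> set \<sigma>" by (rule nth_mem)
    then show "u \<in> {0..<m}" using pp(1) \<open>u = \<sigma>!k\<close> by simp
  qed
  have nbin: "nb m (\<sigma>!j) \<subseteq> SCk m \<sigma> k" if "j \<le> k" "k < m" for j k
  proof -
    have "\<sigma>!j \<in> set (take (Suc k) \<sigma>)"
    proof (cases "j = k")
      case True
      then show ?thesis using that pp(3) by (simp add: take_Suc_conv_app_nth)
    next
      case False
      then show ?thesis using that pp(3) take_mem[of j k \<sigma>] by simp
    qed
    then show ?thesis unfolding SCk_def by blast
  qed
  have ind: "v \<noteq> (u + 1) mod m" if u: "u \<in> I" and v: "v \<in> I" for u v
  proof
    assume eq: "v = (u + 1) mod m"
    obtain j where j: "j \<in> J" "u = \<sigma>!j" using u I_def by auto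
    obtain k where k: "k \<in> J" "v = \<sigma>!k" using v I_def by auto
    have jm: "j < m" "k < m" using j k J_def by auto
    have um: "u < m" "v < m" using u v Isub by auto
    consider "j < k" | "j = k" | "k < j" by linarith
    then show False
    proof cases
      case 1
      have "v \<in> nb m u" using eq by (simp add: nb_def)
      then have "\<sigma>!k \<in> SCk m \<sigma> k" using nbin[of j k] 1 jm j k by auto
      then show False using k J_def by auto
    next
      case 2
      then show False using eq j k A1[of u m] um m3 by auto
    next
      case 3
      have "u = (v + m - 1) mod m" using eq A2[OF um(1)] by simp
      then have "u \<in> nb m v" by (simp add: nb_def)
      then have "\<sigma>!j \<in> SCk m \<sigma> j" using nbin[of k j] 3 jm j k by auto
      then show False using j J_def by auto
    qed
  qed
  have "2 * card I \<le> m - 1" by (rule indep_card[OF Isub odd ind])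
  then have "2 * real (card I) \<le> real m - 1" using m3 by linarith
  then show ?thesis using sumJ cI by simp
qed


lemma id_perm: "[0..<m] \<in> permutations_of_set {0..<m}"
  by (simp add: permutations_of_set_def)

lemma Rterm_nonneg: "finite (set_pmf q) \<Longrightarrow> 0 \<le> Rterm \<sigma> q"
  unfolding Rterm_def by (intro add_nonneg_nonneg sum_nonneg cmi_nonneg) auto

lemma Rbar_nonneg:
  assumes "finite (set_pmf q)"
  shows "0 \<le> Rbar m q"
proof -
  have "Rterm [0..<m] q \<le> Rbar m q"
    unfolding Rbar_def by (rule Max_ge) (use id_perm in auto)
  moreover have "0 \<le> Rterm [0..<m] q" using assms by (rule Rterm_nonneg)
  ultimately show ?thesis by linarith
qed

lemma Rbar_q0:
  assumes odd: "odd m" and m3: "3 \<le> m"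
  shows "Rbar m (q0 m) \<le> (real m - 1) / 2"
  unfolding Rbar_def
proof (subst Max_le_iff)
  show "finite ((\<lambda>\<sigma>. Rterm \<sigma> (q0 m)) ` permutations_of_set {0..<m})" by simp
  show "(\<lambda>\<sigma>. Rterm \<sigma> (q0 m)) ` permutations_of_set {0..<m} \<noteq> {}" using id_perm by auto
  show "\<forall>a\<in>(\<lambda>\<sigma>. Rterm \<sigma> (q0 m)) ` permutations_of_set {0..<m}. a \<le> (real m - 1) / 2"
  proof
    fix a assume "a \<in> (\<lambda>\<sigma>. Rterm \<sigma> (q0 m)) ` permutations_of_set {0..<m}"
    then obtain \<sigma> where s: "\<sigma> \<in> permutations_of_set {0..<m}" "a = Rterm \<sigma> (q0 m)" by auto
    have "Rterm \<sigma> (q0 m) = (\<Sum>k\<in>{0..<m}. of_bool (\<sigma>!k \<notin> SCk m \<sigma> k))"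
      using s(1) m3 by (intro Rterm_q0) auto
    also have "\<dots> \<le> (real m - 1) / 2" by (rule Rterm_bound[OF s(1) odd m3])
    finally show "a \<le> (real m - 1) / 2" using s(2) by simp
  qed
qed

lemma Rlb_bound:
  assumes odd: "odd m" and m3: "3 \<le> m" and eps: "0 \<le> eps"
  shows "Rlb m eps \<le> (real m - 1) / 2"
proof -
  have m0: "0 < m" using m3 by simp
  have Pb: "Pbar m = {P0 m}" using Pbar_char[OF _ m0] P0_in by blast
  have bdd: "bdd_below ((\<lambda>q. Rbar m q) ` Cbar m eps (P0 m))"
    by (rule bdd_belowI[where m=0]) (auto simp: Cbar_def intro: Rbar_nonneg)
  have "(INF q\<in>Cbar m eps (P0 m). Rbar m q) \<le> Rbar m (q0 m)"
    by (rule cInf_lower) (use q0_in[OF eps] bdd in auto)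
  also have "\<dots> \<le> (real m - 1) / 2" by (rule Rbar_q0[OF odd m3])
  finally have "(INF q\<in>Cbar m eps (P0 m). Rbar m q) \<le> (real m - 1) / 2" .
  then show ?thesis unfolding Rlb_def Pb using eps by simp
qed

theorem lemma3:
  fixes m :: nat
  assumes "odd m" and "m \<ge> 5"
  shows "Limsup (at_right 0) (\<lambda>eps. ereal (Rlb m eps)) < ereal (real m / 2)"
proof -
  have "eventually (\<lambda>eps. ereal (Rlb m eps) \<le> ereal ((real m - 1) / 2)) (at_right (0::real))"
    using eventually_at_right_less[of "0::real"]
    by eventually_elim (use assms Rlb_bound in auto)
  then have "Limsup (at_right 0) (\<lambda>eps. ereal (Rlb m eps)) \<le> ereal ((real m - 1) / 2)"
    by (rule Limsup_bounded)
  also have "\<dots> < ereal (real m / 2)" by simp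
  finally show ?thesis .
qed

end
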